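(* Let $R$ be a spherical polygon contained in the interior of a hemisphere of the unit sphere, and let $\mathcal D$ be a Spherical Diagram. Let $x$ be a point of the union of the arcs of $\mathcal D$ lying in the interior of $R$. Then for every great circle $\gamma$ through $x$ there are arcs of $\mathcal D$ that thrust the boundary of $R$ at two distinct points $y$ and $z$, where $y$ and $z$ lie in the two different closed hemispheres bounded by $\gamma$ (i.e., on opposite sides of $\gamma$ or on $\gamma$), and both $y$ and $z$ are internally $R$-connected (with respect to $\mathcal D$) with $x$.
   Context: A geodesic arc on the unit sphere in $\mathbb R^3$ is the unique shortest curve joining two non-antipodal points. An arc $a$ blocks an arc $b$ (equivalently, $b$ hits $a$) if an endpoint of $b$ lies in the relative interior of $a$. A Spherical Diagram (SD) is a finite non-empty collection $\mathcal D$ of pairwise interior-disjoint geodesic arcs on the unit sphere such that each arc of $\mathcal D$ is blocked by arcs of $\mathcal D$ at each of its endpoints. For a spherical polygon $R$ contained in the interior of a hemisphere, an arc $a$ thrusts the boundary of $R$ at a point $y$ if $y\in a\cap\partial R$ and $a$ also intersects the interior of $R$. Two points are internally $R$-connected (with respect to $\mathcal D$) if there is a path between them contained in the union of the arcs of $\mathcal D$, all of whose points except possibly its endpoints lie in the interior of $R$. *)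

theory Defs
  imports "HOL-Analysis.Analysis"
begin

type_synonym pt = "real^3"

abbreviation S2 :: "pt set" where "S2 \<equiv> sphere 0 1"

text \<open>Geodesic arcs are represented by their ordered pair of endpoints (p, q),
 with p, q on the unit sphere, p \<noteq> q and p, q not antipodal.  The arc is the radial
 projection of the chord segment onto the sphere.\<close>

definition valid_arc :: "pt \<times> pt \<Rightarrow> bool" where
  "valid_arc a \<longleftrightarrow> fst a \<in> S2 \<and> snd a \<in> S2 \<and> fst a \<noteq> snd a \<and> fst a \<noteq> - snd a"

definition arcpath :: "pt \<Rightarrow> pt \<Rightarrow> real \<Rightarrow> pt" where
  "arcpath p q t = (1 / norm ((1 - t) *\<^sub>R p + t *\<^sub>R q)) *\<^sub>R ((1 - t) *\<^sub>R p + t *\<^sub>R q)"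

definition arc_set :: "pt \<times> pt \<Rightarrow> pt set" where
  "arc_set a = arcpath (fst a) (snd a) ` {0..1}"

definition arc_relint :: "pt \<times> pt \<Rightarrow> pt set" where
  "arc_relint a = arcpath (fst a) (snd a) ` {0<..<1}"

definition spherical_diagram :: "(pt \<times> pt) set \<Rightarrow> bool" where
  "spherical_diagram D \<longleftrightarrow> finite D \<and> D \<noteq> {} \<and> (\<forall>a\<in>D. valid_arc a)
     \<and> (\<forall>a\<in>D. \<forall>b\<in>D. a \<noteq> b \<longrightarrow> arc_relint a \<inter> arc_relint b = {})
     \<and> (\<forall>a\<in>D. (\<exists>b\<in>D. fst a \<in> arc_relint b) \<and> (\<exists>c\<in>D. snd a \<in> arc_relint c))"

fun polypath :: "pt list \<Rightarrow> real \<Rightarrow> pt" where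
  "polypath [] = (\<lambda>t. 0)"
| "polypath [p] = (\<lambda>t. p)"
| "polypath [p, q] = arcpath p q"
| "polypath (p # q # r # vs) = arcpath p q +++ polypath (q # r # vs)"

definition spherical_polygon :: "pt set \<Rightarrow> bool" where
  "spherical_polygon R \<longleftrightarrow>
     (\<exists>vs. length vs \<ge> 3 \<and> hd vs = last vs
        \<and> (\<forall>i < length vs - 1. valid_arc (vs ! i, vs ! Suc i))
        \<and> simple_path (polypath vs)
        \<and> (\<exists>C \<in> components (S2 - path_image (polypath vs)). R = closure C))"

definition sph_interior :: "pt set \<Rightarrow> pt set" where
  "sph_interior R = {x \<in> R. \<exists>e>0. S2 \<inter> ball x e \<subseteq> R}"

definition sph_boundary :: "pt set \<Rightarrow> pt set" where
  "sph_boundary R = closure R - sph_interior R"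

definition in_open_hemisphere :: "pt set \<Rightarrow> bool" where
  "in_open_hemisphere R \<longleftrightarrow> (\<exists>u. u \<noteq> 0 \<and> (\<forall>v\<in>R. u \<bullet> v > 0))"

definition thrusts :: "pt set \<Rightarrow> pt \<times> pt \<Rightarrow> pt \<Rightarrow> bool" where
  "thrusts R a y \<longleftrightarrow> y \<in> arc_set a \<and> y \<in> sph_boundary R \<and> arc_set a \<inter> sph_interior R \<noteq> {}"

definition internally_connected :: "pt set \<Rightarrow> (pt \<times> pt) set \<Rightarrow> pt \<Rightarrow> pt \<Rightarrow> bool" where
  "internally_connected R D x y \<longleftrightarrow>
     (\<exists>g. path g \<and> pathstart g = x \<and> pathfinish g = y
        \<and> path_image g \<subseteq> (\<Union>a\<in>D. arc_set a)
        \<and> (\<forall>t\<in>{0<..<1}. g t \<in> sph_interior R))"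

end

theory Submission
  imports Defs
begin

definition ell :: "pt \<Rightarrow> pt \<Rightarrow> pt \<Rightarrow> real" where
  "ell u n y = (n \<bullet> y) / (u \<bullet> y)"

definition lexlt :: "pt \<Rightarrow> pt \<Rightarrow> pt \<Rightarrow> pt \<Rightarrow> pt \<Rightarrow> bool" where
  "lexlt u n w y z \<longleftrightarrow> ell u n y < ell u n z \<or> (ell u n y = ell u n z \<and> ell u w y < ell u w z)"

lemma lexlt_trans: "lexlt u n w a b \<Longrightarrow> lexlt u n w b c \<Longrightarrow> lexlt u n w a c"
  unfolding lexlt_def by auto

lemma lexlt_asym: "lexlt u n w a b \<Longrightarrow> \<not> lexlt u n w b a"
  unfolding lexlt_def by auto

lemma ell_neg: "ell u (-n) y = - ell u n y"
  unfolding ell_def by simp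

lemma lexlt_neg: "lexlt u (-n) (-w) a b \<longleftrightarrow> lexlt u n w b a"
  unfolding lexlt_def ell_neg by auto

lemma valid_arc_indep:
  assumes va: "valid_arc (p,q)" and e: "\<alpha> *\<^sub>R p + \<beta> *\<^sub>R q = 0"
  shows "\<alpha> = 0 \<and> \<beta> = 0"
proof -
  have np: "norm p = 1" and nq: "norm q = 1" and pq: "p \<noteq> q" "p \<noteq> - q"
    using va unfolding valid_arc_def by auto
  have e2: "\<alpha> *\<^sub>R p = - (\<beta> *\<^sub>R q)" using e by (simp add: eq_neg_iff_add_eq_0)
  then have "norm (\<alpha> *\<^sub>R p) = norm (\<beta> *\<^sub>R q)" by (metis norm_minus_cancel)
  then have ab: "\<bar>\<alpha>\<bar> = \<bar>\<beta>\<bar>" using np nq by simp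
  show ?thesis
  proof (cases "\<alpha> = 0")
    case True
    then have "\<beta> *\<^sub>R q = 0" using e by simp
    then have "\<beta> = 0" using nq by auto
    then show ?thesis using True by simp
  next
    case False
    from ab have "\<beta> = \<alpha> \<or> \<beta> = - \<alpha>" by arith
    then show ?thesis
    proof
      assume "\<beta> = \<alpha>"
      then have "\<alpha> *\<^sub>R (p + q) = 0" using e by (simp add: scaleR_right_distrib)
      then have "p + q = 0" using False by simp
      then have "p = - q" by (simp add: eq_neg_iff_add_eq_0)
      then show ?thesis using pq by simp
    next
      assume "\<beta> = - \<alpha>"
      then have "\<alpha> *\<^sub>R (p - q) = 0" using e by (simp add: scaleR_diff_right)
      then have "p = q" using False by simp
      then show ?thesis using pq by simp
    qed
  qed
qed

lemma arcV_nz: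
  assumes "valid_arc (p,q)" shows "(1 - t) *\<^sub>R p + t *\<^sub>R q \<noteq> 0"
proof
  assume "(1 - t) *\<^sub>R p + t *\<^sub>R q = 0"
  then have "1 - t = 0 \<and> t = 0" by (rule valid_arc_indep[OF assms])
  then show False by linarith
qed

lemma arcpath_cont:
  assumes "valid_arc (p,q)" shows "continuous_on S (arcpath p q)"
proof -
  have nz: "\<And>t. norm ((1 - t) *\<^sub>R p + t *\<^sub>R q) \<noteq> 0" using arcV_nz[OF assms] by simp
  show ?thesis unfolding arcpath_def[abs_def]
    by (intro continuous_intros) (use arcV_nz[OF assms] in auto)
qed

lemma arcpath_swap: "arcpath q p t = arcpath p q (1 - t)"
proof -
  have "(1 - t) *\<^sub>R q + t *\<^sub>R p = (1 - (1 - t)) *\<^sub>R p + (1 - t) *\<^sub>R q" by simp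
  then show ?thesis unfolding arcpath_def by metis
qed

lemma arcpath_0: assumes "valid_arc (p,q)" shows "arcpath p q 0 = p"
proof -
  have "norm p = 1" using assms unfolding valid_arc_def by simp
  then show ?thesis unfolding arcpath_def by simp
qed

lemma arcpath_1: assumes "valid_arc (p,q)" shows "arcpath p q 1 = q"
proof -
  have "norm q = 1" using assms unfolding valid_arc_def by simp
  then show ?thesis unfolding arcpath_def by simp
qed

lemma arcpath_S2: assumes "valid_arc (p,q)" shows "arcpath p q t \<in> S2"
proof -
  have "norm ((1 - t) *\<^sub>R p + t *\<^sub>R q) \<noteq> 0" using arcV_nz[OF assms] by simp
  then show ?thesis unfolding arcpath_def by simp
qed

lemma arc_set_swap: "arcpath q p ` {0..1} = arcpath p q ` {0..1}"
proof -
  have e: "(\<lambda>t. 1 - t) ` {0..1::real} = {0..1}"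
  proof
    show "(\<lambda>t. 1 - t) ` {0..1::real} \<subseteq> {0..1}" by auto
    show "{0..1::real} \<subseteq> (\<lambda>t. 1 - t) ` {0..1}"
    proof
      fix x :: real assume "x \<in> {0..1}"
      then have "1 - x \<in> {0..1}" "x = 1 - (1 - x)" by auto
      then show "x \<in> (\<lambda>t. 1 - t) ` {0..1}" by (rule rev_image_eqI)
    qed
  qed
  have "arcpath q p ` {0..1} = (arcpath p q \<circ> (\<lambda>t. 1 - t)) ` {0..1}"
    by (rule image_cong) (simp_all add: arcpath_swap[of q p])
  also have "\<dots> = arcpath p q ` ((\<lambda>t. 1 - t) ` {0..1})" by (rule image_comp[symmetric])
  finally have "arcpath q p ` {0..1} = arcpath p q ` ((\<lambda>t. 1 - t) ` {0..1})" .
  then show ?thesis using e by simp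
qed

definition arcV :: "pt \<Rightarrow> pt \<Rightarrow> real \<Rightarrow> pt" where
  "arcV p q t = (1 - t) *\<^sub>R p + t *\<^sub>R q"

definition Cn :: "pt \<Rightarrow> pt \<Rightarrow> pt \<Rightarrow> pt \<Rightarrow> real" where
  "Cn u n p q = (n \<bullet> q) * (u \<bullet> p) - (n \<bullet> p) * (u \<bullet> q)"

definition incr :: "pt \<Rightarrow> pt \<Rightarrow> pt \<Rightarrow> pt \<Rightarrow> pt \<Rightarrow> bool" where
  "incr u n w p q \<longleftrightarrow> Cn u n p q > 0 \<or> (Cn u n p q = 0 \<and> Cn u w p q > 0)"

definition nondeg :: "pt \<Rightarrow> pt \<Rightarrow> pt \<Rightarrow> bool" where
  "nondeg u n w \<longleftrightarrow> (\<forall>r. u \<bullet> r = 0 \<longrightarrow> n \<bullet> r = 0 \<longrightarrow> w \<bullet> r = 0 \<longrightarrow> r = 0)"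

lemma arcpath_V: "arcpath p q t = (1 / norm (arcV p q t)) *\<^sub>R arcV p q t"
  unfolding arcpath_def arcV_def by simp

lemma ell_arcpath:
  assumes va: "valid_arc (p,q)" and pos: "0 < u \<bullet> arcpath p q t"
  shows "0 < u \<bullet> arcV p q t"
    and "ell u n (arcpath p q t) = (n \<bullet> arcV p q t) / (u \<bullet> arcV p q t)"
proof -
  have nV: "norm (arcV p q t) > 0" using arcV_nz[OF va] unfolding arcV_def by simp
  have "u \<bullet> arcpath p q t = (u \<bullet> arcV p q t) / norm (arcV p q t)"
    by (simp add: arcpath_V)
  then show "0 < u \<bullet> arcV p q t" using pos nV by (simp add: zero_less_divide_iff)
  show "ell u n (arcpath p q t) = (n \<bullet> arcV p q t) / (u \<bullet> arcV p q t)"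
    unfolding ell_def arcpath_V using nV by simp
qed

lemma ell_diff:
  assumes "0 < u \<bullet> arcV p q s" "0 < u \<bullet> arcV p q t"
  shows "(n \<bullet> arcV p q s) / (u \<bullet> arcV p q s) - (n \<bullet> arcV p q t) / (u \<bullet> arcV p q t)
    = (s - t) * Cn u n p q / ((u \<bullet> arcV p q s) * (u \<bullet> arcV p q t))"
proof -
  have key: "(n \<bullet> arcV p q s) * (u \<bullet> arcV p q t) - (n \<bullet> arcV p q t) * (u \<bullet> arcV p q s)
     = (s - t) * Cn u n p q"
    by (simp add: arcV_def Cn_def inner_add_right algebra_simps)
  show ?thesis using assms by (simp add: diff_frac_eq key)
qed

lemma incr_mono:
  assumes va: "valid_arc (p,q)" and inc: "incr u n w p q" and ts: "t < s"
    and pt: "0 < u \<bullet> arcpath p q t" and ps: "0 < u \<bullet> arcpath p q s"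
  shows "lexlt u n w (arcpath p q t) (arcpath p q s)"
proof -
  have vt: "0 < u \<bullet> arcV p q t" and vs: "0 < u \<bullet> arcV p q s"
    using ell_arcpath(1)[OF va pt] ell_arcpath(1)[OF va ps] by auto
  have den: "0 < (u \<bullet> arcV p q s) * (u \<bullet> arcV p q t)" using vt vs by simp
  have dn: "ell u n (arcpath p q s) - ell u n (arcpath p q t) = (s - t) * Cn u n p q / ((u \<bullet> arcV p q s) * (u \<bullet> arcV p q t))"
    using ell_diff[OF vs vt, of n] ell_arcpath(2)[OF va ps, of n] ell_arcpath(2)[OF va pt, of n] by simp
  have dw: "ell u w (arcpath p q s) - ell u w (arcpath p q t) = (s - t) * Cn u w p q / ((u \<bullet> arcV p q s) * (u \<bullet> arcV p q t))"
    using ell_diff[OF vs vt, of w] ell_arcpath(2)[OF va ps, of w] ell_arcpath(2)[OF va pt, of w] by simp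
  have st: "0 < s - t" using ts by simp
  show ?thesis
    using inc unfolding incr_def
  proof
    assume "Cn u n p q > 0"
    then have "0 < (s - t) * Cn u n p q / ((u \<bullet> arcV p q s) * (u \<bullet> arcV p q t))"
      using st den by simp
    then show ?thesis unfolding lexlt_def using dn by simp
  next
    assume c: "Cn u n p q = 0 \<and> Cn u w p q > 0"
    then have "0 < (s - t) * Cn u w p q / ((u \<bullet> arcV p q s) * (u \<bullet> arcV p q t))"
      using st den by simp
    then show ?thesis unfolding lexlt_def using dn dw c by simp
  qed
qed

lemma orient:
  assumes va: "valid_arc (p,q)" and pos: "0 < u \<bullet> arcpath p q t" and nd: "nondeg u n w"
  shows "incr u n w p q \<or> incr u n w q p"
proof (rule ccontr)
  assume "\<not> (incr u n w p q \<or> incr u n w q p)"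
  moreover have "Cn u n q p = - Cn u n p q" "Cn u w q p = - Cn u w p q"
    unfolding Cn_def by (simp_all add: algebra_simps)
  ultimately have c: "Cn u n p q = 0" "Cn u w p q = 0" unfolding incr_def by auto
  define r where "r = (- (u \<bullet> q)) *\<^sub>R p + (u \<bullet> p) *\<^sub>R q"
  have "u \<bullet> r = 0" unfolding r_def by (simp add: inner_add_right algebra_simps)
  moreover have "n \<bullet> r = 0" using c(1) unfolding r_def Cn_def by (simp add: inner_add_right algebra_simps)
  moreover have "w \<bullet> r = 0" using c(2) unfolding r_def Cn_def by (simp add: inner_add_right algebra_simps)
  ultimately have "r = 0" using nd unfolding nondeg_def by blast
  then have "- (u \<bullet> q) = 0 \<and> u \<bullet> p = 0" using valid_arc_indep[OF va] unfolding r_def by blast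
  then have "u \<bullet> arcV p q t = 0" unfolding arcV_def by (simp add: inner_add_right)
  then show False using ell_arcpath(1)[OF va pos] by simp
qed

lemma nondeg_cross:
  assumes ux: "0 < u \<bullet> x" and nx: "n \<bullet> x = 0" and n0: "n \<noteq> 0"
  shows "nondeg u n (cross3 u n)"
proof -
  have c0: "cross3 u n \<noteq> 0"
  proof
    assume h: "cross3 u n = 0"
    have "cross3 n (cross3 u n) = (n \<bullet> n) *\<^sub>R u - (n \<bullet> u) *\<^sub>R n" by (rule Lagrange)
    then have "(n \<bullet> n) *\<^sub>R u - (n \<bullet> u) *\<^sub>R n = 0" using h by simp
    then have "x \<bullet> ((n \<bullet> n) *\<^sub>R u - (n \<bullet> u) *\<^sub>R n) = 0" by simp
    then have "(n \<bullet> n) * (u \<bullet> x) = 0" using nx by (simp add: inner_diff_right inner_commute)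
    moreover have "n \<bullet> n > 0" using n0 by simp
    ultimately show False using ux by simp
  qed
  show ?thesis unfolding nondeg_def
  proof (intro allI impI)
    fix r assume ru: "u \<bullet> r = 0" and rn: "n \<bullet> r = 0" and rw: "(cross3 u n) \<bullet> r = 0"
    have "cross3 r (cross3 u n) = (r \<bullet> n) *\<^sub>R u - (r \<bullet> u) *\<^sub>R n" by (rule Lagrange)
    then have cr: "cross3 r (cross3 u n) = 0" using ru rn by (simp add: inner_commute)
    have "(norm (cross3 r (cross3 u n)))\<^sup>2 + (r \<bullet> (cross3 u n))\<^sup>2 = (norm r * norm (cross3 u n))\<^sup>2"
      by (rule norm_cross_dot)
    then have "(norm r * norm (cross3 u n))\<^sup>2 = 0" using cr rw by (simp add: inner_commute)
    then show "r = 0" using c0 by simp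
  qed
qed

lemma nondeg_neg: "nondeg u n w \<Longrightarrow> nondeg u (-n) (-w)"
  unfolding nondeg_def by simp


lemma int_sub: "sph_interior R \<subseteq> R"
  unfolding sph_interior_def by auto

lemma closed_S2_minus_int:
  assumes RS: "R \<subseteq> S2" shows "closed (S2 - sph_interior R)"
proof -
  define U where "U = \<Union>{ball x e | x e. 0 < e \<and> S2 \<inter> ball x e \<subseteq> R}"
  have oU: "open U" unfolding U_def by (auto intro!: open_Union)
  have eq: "sph_interior R = S2 \<inter> U"
  proof
    show "sph_interior R \<subseteq> S2 \<inter> U"
    proof
      fix z assume z: "z \<in> sph_interior R"
      then obtain e where e: "e > 0" "S2 \<inter> ball z e \<subseteq> R" "z \<in> R"
        unfolding sph_interior_def by auto
      have "z \<in> ball z e" using e(1) by simp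
      then have "z \<in> U" unfolding U_def using e by blast
      then show "z \<in> S2 \<inter> U" using e(3) RS by blast
    qed
    show "S2 \<inter> U \<subseteq> sph_interior R"
    proof
      fix z assume z: "z \<in> S2 \<inter> U"
      then obtain x e where xe: "0 < e" "S2 \<inter> ball x e \<subseteq> R" "z \<in> ball x e"
        unfolding U_def by blast
      define e' where "e' = e - dist x z"
      have e'0: "e' > 0" using xe(3) unfolding e'_def by simp
      have bb: "ball z e' \<subseteq> ball x e"
      proof
        fix y assume "y \<in> ball z e'"
        then have "dist z y < e'" by simp
        moreover have "dist x y \<le> dist x z + dist z y" by (rule dist_triangle)
        ultimately show "y \<in> ball x e" unfolding e'_def by simp
      qed
      have "z \<in> R" using z xe by blast
      then show "z \<in> sph_interior R" unfolding sph_interior_def using e'0 bb xe(2) by blast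
    qed
  qed
  then have "S2 - sph_interior R = S2 \<inter> (- U)" by blast
  moreover have "closed (- U)" using oU by (rule closed_Compl)
  ultimately show ?thesis by (simp add: closed_Int)
qed

lemma ic_join:
  assumes "internally_connected R D p e" "internally_connected R D e y" "e \<in> sph_interior R"
  shows "internally_connected R D p y"
proof -
  obtain g1 where g1: "path g1" "pathstart g1 = p" "pathfinish g1 = e"
    "path_image g1 \<subseteq> (\<Union>a\<in>D. arc_set a)" "\<forall>t\<in>{0<..<1}. g1 t \<in> sph_interior R"
    using assms(1) unfolding internally_connected_def by blast
  obtain g2 where g2: "path g2" "pathstart g2 = e" "pathfinish g2 = y"
    "path_image g2 \<subseteq> (\<Union>a\<in>D. arc_set a)" "\<forall>t\<in>{0<..<1}. g2 t \<in> sph_interior R"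
    using assms(2) unfolding internally_connected_def by blast
  have j: "pathfinish g1 = pathstart g2" using g1 g2 by simp
  have "\<forall>t\<in>{0<..<1}. (g1 +++ g2) t \<in> sph_interior R"
  proof
    fix t :: real assume t: "t \<in> {0<..<1}"
    consider "t < 1/2" | "t = 1/2" | "t > 1/2" by linarith
    then show "(g1 +++ g2) t \<in> sph_interior R"
    proof cases
      case 1
      then have "2 * t \<in> {0<..<1}" using t by simp
      then show ?thesis using 1 g1(5) unfolding joinpaths_def by simp
    next
      case 2
      show ?thesis unfolding 2 joinpaths_def using g1(3) assms(3) by (simp add: pathfinish_def)
    next
      case 3
      then have "2 * t - 1 \<in> {0<..<1}" using t by simp
      then show ?thesis using 3 g2(5) unfolding joinpaths_def by simp
    qed
  qed
  moreover have "path (g1 +++ g2)" using g1(1) g2(1) j by simp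
  moreover have "pathstart (g1 +++ g2) = p" using g1 by simp
  moreover have "pathfinish (g1 +++ g2) = y" using g2 by simp
  moreover have "path_image (g1 +++ g2) \<subseteq> (\<Union>a\<in>D. arc_set a)"
    using path_image_join[OF j] g1(4) g2(4) by simp
  ultimately show ?thesis unfolding internally_connected_def by blast
qed

lemma arc_ic:
  assumes va: "valid_arc (p1,q1)" and sub: "arcpath p1 q1 ` {0..1} \<subseteq> (\<Union>a\<in>D. arc_set a)"
    and t: "0 \<le> t0" "t0 < t1" "t1 \<le> 1"
    and int: "\<And>t. t0 < t \<Longrightarrow> t < t1 \<Longrightarrow> arcpath p1 q1 t \<in> sph_interior R"
  shows "internally_connected R D (arcpath p1 q1 t0) (arcpath p1 q1 t1)"
proof -
  define g where "g = (\<lambda>\<tau>. arcpath p1 q1 (t0 + \<tau> * (t1 - t0)))"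
  have cont: "continuous_on UNIV (arcpath p1 q1)" by (rule arcpath_cont[OF va])
  have "continuous_on {0..1} g" unfolding g_def
    by (rule continuous_on_compose2[OF cont]) (auto intro!: continuous_intros)
  then have "path g" unfolding path_def .
  moreover have "pathstart g = arcpath p1 q1 t0" unfolding g_def pathstart_def by simp
  moreover have "pathfinish g = arcpath p1 q1 t1" unfolding g_def pathfinish_def by simp
  moreover have "path_image g \<subseteq> (\<Union>a\<in>D. arc_set a)"
  proof
    fix z assume "z \<in> path_image g"
    then obtain \<tau> where \<tau>: "\<tau> \<in> {0..1}" "z = g \<tau>" unfolding path_image_def by auto
    have "0 \<le> \<tau> * (t1 - t0)" using \<tau> t by simp
    moreover have "\<tau> * (t1 - t0) \<le> t1 - t0" using mult_right_mono[of \<tau> 1 "t1 - t0"] \<tau> t by simp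
    ultimately have "0 \<le> t0 + \<tau> * (t1 - t0)" "t0 + \<tau> * (t1 - t0) \<le> 1" using t by linarith+
    then have "t0 + \<tau> * (t1 - t0) \<in> {0..1}" by simp
    then show "z \<in> (\<Union>a\<in>D. arc_set a)" using sub \<tau> unfolding g_def by blast
  qed
  moreover have "\<forall>\<tau>\<in>{0<..<1}. g \<tau> \<in> sph_interior R"
  proof
    fix \<tau> :: real assume \<tau>: "\<tau> \<in> {0<..<1}"
    have "0 < \<tau> * (t1 - t0)" using \<tau> t by simp
    moreover have "\<tau> * (t1 - t0) < t1 - t0" using mult_strict_right_mono[of \<tau> 1 "t1 - t0"] \<tau> t by simp
    ultimately show "g \<tau> \<in> sph_interior R" using int unfolding g_def by simp
  qed
  ultimately show ?thesis unfolding internally_connected_def by blast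
qed

lemma relint_arc:
  assumes a: "a \<in> D" "p \<in> arc_set a" and D: "spherical_diagram D"
  shows "\<exists>b\<in>D. p \<in> arc_relint b"
proof -
  obtain t where t: "t \<in> {0..1}" "p = arcpath (fst a) (snd a) t"
    using a(2) unfolding arc_set_def by auto
  have va: "valid_arc (fst a, snd a)" using a(1) D unfolding spherical_diagram_def by auto
  consider "t = 0" | "t = 1" | "t \<in> {0<..<1}" using t(1) by fastforce
  then show ?thesis
  proof cases
    case 1
    then have "p = fst a" using t(2) arcpath_0[OF va] by simp
    then show ?thesis using a(1) D unfolding spherical_diagram_def by blast
  next
    case 2
    then have "p = snd a" using t(2) arcpath_1[OF va] by simp
    then show ?thesis using a(1) D unfolding spherical_diagram_def by blast
  next
    case 3
    then show ?thesis using a(1) t(2) unfolding arc_relint_def by blast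
  qed
qed

lemma oriented:
  assumes D: "spherical_diagram D" and b: "b \<in> D" "p \<in> arc_relint b"
    and pos: "0 < u \<bullet> p" and nd: "nondeg u n w"
  shows "\<exists>p1 q1 t0. valid_arc (p1,q1) \<and> arc_set b = arcpath p1 q1 ` {0..1} \<and> incr u n w p1 q1
           \<and> 0 < t0 \<and> t0 < 1 \<and> p = arcpath p1 q1 t0"
proof -
  obtain b1 b2 where bb: "b = (b1,b2)" by (cases b)
  have va: "valid_arc (b1,b2)" using D b bb unfolding spherical_diagram_def by auto
  obtain t where t: "0 < t" "t < 1" "p = arcpath b1 b2 t"
    using b(2) bb unfolding arc_relint_def by auto
  have va2: "valid_arc (b2,b1)" using va unfolding valid_arc_def by (auto simp: minus_equation_iff)
  have "incr u n w b1 b2 \<or> incr u n w b2 b1" using orient[OF va _ nd, of t] pos t(3) by simp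
  then show ?thesis
  proof
    assume "incr u n w b1 b2"
    then show ?thesis using va t bb unfolding arc_set_def by auto
  next
    assume i: "incr u n w b2 b1"
    have "arcpath b2 b1 (1 - t) = arcpath b1 b2 t"
      using arcpath_swap[where q=b2 and p=b1 and t="1 - t"] by simp
    then have "p = arcpath b2 b1 (1 - t)" using t(3) by simp
    moreover have "arc_set b = arcpath b2 b1 ` {0..1}" using bb arc_set_swap[of b2 b1] unfolding arc_set_def by simp
    moreover have "0 < 1 - t" "1 - t < 1" using t by auto
    ultimately show ?thesis using va2 i by blast
  qed
qed


definition Nc :: "pt \<Rightarrow> pt \<Rightarrow> pt \<Rightarrow> (pt \<times> pt) set \<Rightarrow> pt \<Rightarrow> nat" where
  "Nc u n w D p = card {a\<in>D. \<exists>q\<in>arc_set a. 0 < u \<bullet> q \<and> lexlt u n w p q}"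

lemma walk:
  assumes Rc: "closed R" and RS: "R \<subseteq> S2" and Ru: "\<forall>v\<in>R. 0 < u \<bullet> v"
    and D: "spherical_diagram D" and nd: "nondeg u n w"
  shows "p \<in> sph_interior R \<Longrightarrow> p \<in> (\<Union>a\<in>D. arc_set a) \<Longrightarrow>
     \<exists>y a. a \<in> D \<and> thrusts R a y \<and> lexlt u n w p y \<and> internally_connected R D p y"
proof (induction "Nc u n w D p" arbitrary: p rule: less_induct)
  case less
  have pR: "p \<in> R" using less.prems(1) unfolding sph_interior_def by auto
  have pu: "0 < u \<bullet> p" using pR Ru by auto
  obtain a0 where a0: "a0 \<in> D" "p \<in> arc_set a0" using less.prems(2) by auto
  obtain b where b: "b \<in> D" "p \<in> arc_relint b" using relint_arc[OF a0 D] by auto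
  obtain p1 q1 t0 where o: "valid_arc (p1,q1)" "arc_set b = arcpath p1 q1 ` {0..1}"
      "incr u n w p1 q1" "0 < t0" "t0 < 1" "p = arcpath p1 q1 t0"
    using oriented[OF D b pu nd] by blast
  define P where "P = arcpath p1 q1"
  have Pc: "continuous_on UNIV P" unfolding P_def by (rule arcpath_cont[OF o(1)])
  have PS: "\<And>t. P t \<in> S2" unfolding P_def by (rule arcpath_S2[OF o(1)])
  have sub: "P ` {0..1} \<subseteq> (\<Union>a\<in>D. arc_set a)" using o(2) b(1) unfolding P_def by auto
  have inarc: "\<And>t. t \<in> {0..1} \<Longrightarrow> P t \<in> arc_set b" using o(2) unfolding P_def by auto
  have pP: "p = P t0" using o(6) unfolding P_def by simp
  have monoP: "\<And>t s. t < s \<Longrightarrow> P t \<in> R \<Longrightarrow> P s \<in> R \<Longrightarrow> lexlt u n w (P t) (P s)"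
    unfolding P_def using incr_mono[OF o(1) o(3)] Ru by auto
  define T where "T = {t0..1} \<inter> P -` (S2 - sph_interior R)"
  have Tcl: "closed T" unfolding T_def
    by (rule continuous_closed_preimage[OF continuous_on_subset[OF Pc] closed_atLeastAtMost closed_S2_minus_int[OF RS]]) simp
  have Tmem: "\<And>t. t \<in> T \<longleftrightarrow> t \<in> {t0..1} \<and> P t \<notin> sph_interior R" unfolding T_def using PS by auto
  show ?case
  proof (cases "T = {}")
    case True
    then have allint: "\<And>t. t0 \<le> t \<Longrightarrow> t \<le> 1 \<Longrightarrow> P t \<in> sph_interior R" using Tmem by auto
    define e where "e = P 1"
    have eint: "e \<in> sph_interior R" using allint o(5) unfolding e_def by simp
    have eR: "e \<in> R" using eint unfolding sph_interior_def by auto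
    have "P 1 \<in> P ` {0..1}" by simp
    then have earc: "e \<in> (\<Union>a\<in>D. arc_set a)" using sub unfolding e_def by blast
    have pe: "lexlt u n w p e" unfolding pP e_def using monoP o(5) pR eR pP e_def by simp
    have Nlt: "Nc u n w D e < Nc u n w D p"
    proof -
      have fin: "finite D" using D unfolding spherical_diagram_def by simp
      have "{a\<in>D. \<exists>q\<in>arc_set a. 0 < u \<bullet> q \<and> lexlt u n w e q}
          \<subset> {a\<in>D. \<exists>q\<in>arc_set a. 0 < u \<bullet> q \<and> lexlt u n w p q}"
      proof
        show "{a\<in>D. \<exists>q\<in>arc_set a. 0 < u \<bullet> q \<and> lexlt u n w e q}
          \<subseteq> {a\<in>D. \<exists>q\<in>arc_set a. 0 < u \<bullet> q \<and> lexlt u n w p q}"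
          using pe lexlt_trans by blast
        have "b \<in> {a\<in>D. \<exists>q\<in>arc_set a. 0 < u \<bullet> q \<and> lexlt u n w p q}"
          using b(1) inarc[of 1] pe eR Ru unfolding e_def by auto
        moreover have "b \<notin> {a\<in>D. \<exists>q\<in>arc_set a. 0 < u \<bullet> q \<and> lexlt u n w e q}"
        proof
          assume "b \<in> {a\<in>D. \<exists>q\<in>arc_set a. 0 < u \<bullet> q \<and> lexlt u n w e q}"
          then obtain q where q: "q \<in> arc_set b" "0 < u \<bullet> q" "lexlt u n w e q" by auto
          then obtain s where s: "s \<in> {0..1}" "q = P s" using o(2) unfolding P_def by auto
          show False
          proof (cases "s = 1")
            case True
            then show False using q(3) s(2) lexlt_asym unfolding e_def by blast
          next
            case False
            then have s1: "s < 1" using s by auto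
            have "lexlt u n w (P s) (P 1)"
              using incr_mono[OF o(1) o(3) s1] q(2) s(2) eR Ru unfolding e_def P_def by auto
            then show False using q(3) s(2) lexlt_asym unfolding e_def by blast
          qed
        qed
        ultimately show "{a\<in>D. \<exists>q\<in>arc_set a. 0 < u \<bullet> q \<and> lexlt u n w e q}
          \<noteq> {a\<in>D. \<exists>q\<in>arc_set a. 0 < u \<bullet> q \<and> lexlt u n w p q}" by blast
      qed
      then show ?thesis unfolding Nc_def using fin by (intro psubset_card_mono) auto
    qed
    obtain y a where ya: "a \<in> D" "thrusts R a y" "lexlt u n w e y" "internally_connected R D e y"
      using less.hyps[OF Nlt eint earc] by blast
    have icpe: "internally_connected R D p e"
      using arc_ic[OF o(1) sub[unfolded P_def], of t0 1 R] o(4,5) allint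
      unfolding e_def pP P_def by auto
    show ?thesis using ya ic_join[OF icpe ya(4) eint] lexlt_trans[OF pe ya(3)] by blast
  next
    case False
    have "bounded T" using bounded_closed_interval[of t0 1] unfolding T_def
      by (rule bounded_subset) auto
    then have Tcomp: "compact T" using Tcl by (simp add: compact_eq_bounded_closed)
    obtain ts where ts: "ts \<in> T" "\<forall>t\<in>T. ts \<le> t" using compact_attains_inf[OF Tcomp False] by auto
    have ts1: "t0 \<le> ts" "ts \<le> 1" "P ts \<notin> sph_interior R" using ts(1) Tmem by auto
    have ts0: "t0 < ts" using ts1 less.prems(1) pP by (cases "ts = t0") auto
    have before: "\<And>t. t0 \<le> t \<Longrightarrow> t < ts \<Longrightarrow> P t \<in> sph_interior R"
      using ts(2) Tmem ts1 by force
    define y where "y = P ts"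
    have yR: "y \<in> R"
    proof -
      have "P ` {t0..<ts} \<subseteq> R" using before int_sub by fastforce
      then have "P ` closure {t0..<ts} \<subseteq> R"
        by (rule image_closure_subset[OF continuous_on_subset[OF Pc] Rc, rotated]) simp
      moreover have "closure {t0..<ts} = {t0..ts}" using ts0 by simp
      ultimately show ?thesis unfolding y_def using ts0 by auto
    qed
    have ybd: "y \<in> sph_boundary R" unfolding sph_boundary_def
      using yR ts1(3) closure_closed[OF Rc] unfolding y_def by simp
    have thr: "thrusts R b y" unfolding thrusts_def
      using inarc[of ts] ts1 ybd inarc[of t0] o(4,5) less.prems(1) pP unfolding y_def by auto
    have py: "lexlt u n w p y" unfolding pP y_def using monoP ts0 pR yR pP y_def by simp
    have icpy: "internally_connected R D p y"
      using arc_ic[OF o(1) sub[unfolded P_def], of t0 ts R] o(4) ts0 ts1(2) before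
      unfolding y_def pP P_def by auto
    show ?thesis using thr py icpy b(1) by blast
  qed
qed


lemma lexlt_ell_le: "lexlt u n w a b \<Longrightarrow> ell u n a \<le> ell u n b"
  unfolding lexlt_def by auto

theorem mainTheorem19:
  fixes R :: "(real^3) set" and D :: "((real^3) \<times> (real^3)) set"
    and x n :: "real^3"
  assumes "spherical_polygon R" and "in_open_hemisphere R"
    and "spherical_diagram D"
    and "x \<in> (\<Union>a\<in>D. arc_set a)" and "x \<in> sph_interior R"
    and "n \<noteq> 0" and "n \<bullet> x = 0"
  shows "\<exists>y z a b. a \<in> D \<and> b \<in> D \<and> thrusts R a y \<and> thrusts R b z \<and> y \<noteq> z
           \<and> n \<bullet> y \<ge> 0 \<and> n \<bullet> z \<le> 0
           \<and> internally_connected R D x y \<and> internally_connected R D x z"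
proof -
  obtain u where u: "u \<noteq> 0" "\<forall>v\<in>R. u \<bullet> v > 0"
    using assms(2) unfolding in_open_hemisphere_def by blast
  obtain vs C where C: "C \<in> components (S2 - path_image (polypath vs))" "R = closure C"
    using assms(1) unfolding spherical_polygon_def by blast
  have Rc: "closed R" using C(2) by simp
  have "C \<subseteq> S2" using in_components_subset[OF C(1)] by blast
  then have RS: "R \<subseteq> S2" using C(2) closure_minimal[of C S2] by simp
  have xu: "0 < u \<bullet> x" using assms(5) u(2) int_sub by blast
  have nd1: "nondeg u n (cross3 u n)" by (rule nondeg_cross[OF xu assms(7) assms(6)])
  have nd2: "nondeg u (-n) (- cross3 u n)" by (rule nondeg_neg[OF nd1])
  obtain y a where ya: "a \<in> D" "thrusts R a y" "lexlt u n (cross3 u n) x y" "internally_connected R D x y"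
    using walk[OF Rc RS u(2) assms(3) nd1 assms(5) assms(4)] by blast
  obtain z b where zb: "b \<in> D" "thrusts R b z" "lexlt u (-n) (- cross3 u n) x z" "internally_connected R D x z"
    using walk[OF Rc RS u(2) assms(3) nd2 assms(5) assms(4)] by blast
  have zx: "lexlt u n (cross3 u n) z x" using zb(3) lexlt_neg by blast
  have yR: "y \<in> R" using ya(2) closure_closed[OF Rc] unfolding thrusts_def sph_boundary_def by auto
  have zR: "z \<in> R" using zb(2) closure_closed[OF Rc] unfolding thrusts_def sph_boundary_def by auto
  have ex: "ell u n x = 0" unfolding ell_def using assms(7) by simp
  have "0 \<le> (n \<bullet> y) / (u \<bullet> y)" using lexlt_ell_le[OF ya(3)] ex unfolding ell_def by simp
  moreover have "0 < u \<bullet> y" using u(2) yR by blast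
  ultimately have ny: "n \<bullet> y \<ge> 0" by (simp add: zero_le_divide_iff)
  have "(n \<bullet> z) / (u \<bullet> z) \<le> 0" using lexlt_ell_le[OF zx] ex unfolding ell_def by simp
  moreover have "0 < u \<bullet> z" using u(2) zR by blast
  ultimately have nz: "n \<bullet> z \<le> 0" by (simp add: divide_le_0_iff)
  have "y \<noteq> z"
  proof
    assume "y = z"
    then have "lexlt u n (cross3 u n) y y" using lexlt_trans[OF zx ya(3)] by simp
    then show False using lexlt_asym by blast
  qed
  then show ?thesis using ya zb ny nz by blast
qed

end
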